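(* Assume the setting, hypotheses and Rothe scheme described in the context, and for every sufficiently small $\tau=T/N$ let $\{u_\tau^n\}_{n=1}^N$, $\{\xi_\tau^n\}_{n=1}^N$ be a solution of Problem $\mathcal P_\tau$, with the functions $\bar u_\tau,u_\tau$ defined as in the context. Then $\|u_\tau-\bar u_\tau\|_{L^2(0,T;V^* )}\to0$ as $\tau\to0$.
   Context: $V$ is a real reflexive separable Banach space with norm $\|\cdot\|$, $H$ is a real separable Hilbert space with inner product $(\cdot,\cdot)$ and norm $|\cdot|$, identified with its dual, and $V\subset H\subset V^*$ with dense continuous embeddings, the embedding $V\subset H$ being compact; $\langle\cdot,\cdot\rangle$ is the $V^*\times V$ duality pairing, with $\langle u,v\rangle=(u,v)$ for $u\in H$, $v\in V$. $U$ is a reflexive Banach space, $T>0$. For locally Lipschitz $J\colon U\to\mathbb R$, $J^0(x;v)=\limsup_{y\to x,\lambda\downarrow0}\frac{J(y+\lambda v)-J(y)}{\lambda}$ and $\partial J(x)=\{\xi\in U^*:J^0(x;v)\ge\langle\xi,v\rangle_{U^*\times U}\ \forall v\in U\}$ (Clarke subdifferential); $\iota^*$ is the adjoint of $\iota$. Hypotheses: (H(A)) $A\colon V\to V^*$ is pseudomonotone (whenever $v_n\to v$ weakly in $V$ and $\limsup_n\langle Av_n,v_n-v\rangle\le0$, then $\langle Av,v-y\rangle\le\liminf_n\langle Av_n,v_n-y\rangle$ for all $y\in V$), $\|Av\|_{V^*}\le a+b\|v\|$ ($a\ge0,b>0$), $\langle Av,v\rangle\ge\alpha\|v\|^2-\beta|v|^2$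 ($\alpha>0,\beta\ge0$) for all $v\in V$. (H(J)) $J$ is locally Lipschitz and $\|\xi\|_{U^*}\le d(1+\|u\|_U)$ for all $u\in U$, $\xi\in\partial J(u)$, $d>0$. (H($\iota$)) $\iota\colon V\to U$ is linear, continuous, compact, and $\iota=\iota_2\circ\iota_1$ where $Z$ is a Banach space with $V\subset Z\subset H$, $V\subset Z$ compact, $Z\subset H$ continuous, $\iota_1\colon V\to Z$ the identity and $\iota_2\colon Z\to U$ linear continuous. (H(f)) $f\in L^2(0,T;V^* )$. (H(0)) $u_0\in H$. Rothe scheme: for $N\in\mathbb N$, $\tau=T/N$, an element $u_\tau^0\in V$ is given for each $\tau$, such that $u_\tau^0\to u_0$ strongly in $H$ as $\tau\to0$ and $\|u_\tau^0\|\le c_0/\sqrt\tau$ with $c_0$ independent of $\tau$. Set $f_\tau^1=\frac1\tau\int_0^\tau f\,dt$ and $f_\tau^n=\frac{3}{2\tau}\int_{(n-1)\tau}^{n\tau}f\,dt-\frac1{2\tau}\int_{(n-2)\tau}^{(n-1)\tau}f\,dt$, $n=2,\dots,N$. Problem $\mathcal P_\tau$: find $\{u_\tau^n\}_{n=1}^N\subset V$ and $\{\xi_\tau^n\}_{n=1}^N\subset U^*$ with $\frac1\tau(u_\tau^1-u_\tau^0)+Au_\tau^1+\iota^*\xi_\tau^1=f_\tau^1$, $\xi_\tau^1\in\partial J(\iota u_\tau^1)$, and for $n=2,\dots,N$: $\frac1\tau(\frac32u_\tau^n-2u_\tau^{n-1}+\frac12u_\tau^{n-2})+Au_\tau^n+\iota^*\xi_\tau^n=f_\tau^n$,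 $\xi_\tau^n\in\partial J(\iota u_\tau^n)$. Interpolants: $\bar u_\tau(0)=u_\tau^0$ and $\bar u_\tau(t)=u_\tau^n$ for $t\in((n-1)\tau,n\tau]$, $n=1,\dots,N$; $u_\tau(t)=\frac32u_\tau^1-\frac12u_\tau^0+(u_\tau^1-u_\tau^0)\frac{t-\tau}{\tau}$ for $t\in[0,\tau]$, and $u_\tau(t)=\frac32u_\tau^n-\frac12u_\tau^{n-1}+(\frac32u_\tau^n-2u_\tau^{n-1}+\frac12u_\tau^{n-2})\frac{t-n\tau}{\tau}$ for $t\in[(n-1)\tau,n\tau]$, $n=2,\dots,N$. *)

theory Defs
  imports "HOL-Analysis.Analysis" "HOL-Library.Liminf_Limsup"
begin

text \<open>Dual space of a normed space X is modelled as the type X =>L real.\<close>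

definition separable_space :: "'a::metric_space itself \<Rightarrow> bool" where
  "separable_space _ \<longleftrightarrow> (\<exists>D::'a set. countable D \<and> closure D = UNIV)"

definition reflexive_space :: "'a::real_normed_vector itself \<Rightarrow> bool" where
  "reflexive_space _ \<longleftrightarrow>
     (\<forall>\<phi> :: ('a \<Rightarrow>\<^sub>L real) \<Rightarrow>\<^sub>L real. \<exists>x::'a. \<forall>l. blinfun_apply \<phi> l = blinfun_apply l x)"

definition compact_op :: "('a::real_normed_vector \<Rightarrow>\<^sub>L 'b::real_normed_vector) \<Rightarrow> bool" where
  "compact_op L \<longleftrightarrow> compact (closure (blinfun_apply L ` cball 0 1))"

definition weak_conv :: "(nat \<Rightarrow> 'a::real_normed_vector) \<Rightarrow> 'a \<Rightarrow> bool" where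
  "weak_conv x l \<longleftrightarrow> (\<forall>\<phi> :: 'a \<Rightarrow>\<^sub>L real. (\<lambda>n. blinfun_apply \<phi> (x n)) \<longlonglongrightarrow> blinfun_apply \<phi> l)"

definition pseudomonotone :: "('a::real_normed_vector \<Rightarrow> ('a \<Rightarrow>\<^sub>L real)) \<Rightarrow> bool" where
  "pseudomonotone A \<longleftrightarrow>
     (\<forall>vs v. weak_conv vs v \<and>
        Limsup sequentially (\<lambda>n. ereal (A (vs n) (vs n - v))) \<le> 0 \<longrightarrow>
        (\<forall>y. ereal (A v (v - y)) \<le> Liminf sequentially (\<lambda>n. ereal (A (vs n) (vs n - y)))))"

definition locally_lipschitz_fun :: "('a::real_normed_vector \<Rightarrow> real) \<Rightarrow> bool" where
  "locally_lipschitz_fun J \<longleftrightarrow>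
     (\<forall>x. \<exists>r>0. \<exists>L. \<forall>y\<in>ball x r. \<forall>z\<in>ball x r. \<bar>J y - J z\<bar> \<le> L * norm (y - z))"

definition clarke_dd :: "('a::real_normed_vector \<Rightarrow> real) \<Rightarrow> 'a \<Rightarrow> 'a \<Rightarrow> ereal" where
  "clarke_dd J x v =
     Limsup (at (x, 0) within (UNIV \<times> {0<..}))
       (\<lambda>(y, l). ereal ((J (y + l *\<^sub>R v) - J y) / l))"

definition clarke_subdiff :: "('a::real_normed_vector \<Rightarrow> real) \<Rightarrow> 'a \<Rightarrow> ('a \<Rightarrow>\<^sub>L real) set" where
  "clarke_subdiff J x = {\<xi>. \<forall>v. ereal (blinfun_apply \<xi> v) \<le> clarke_dd J x v}"

text \<open>Embedding H -> V*, h |-> (v |-> (h, i v)), where i : V -> H is the embedding.\<close>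
definition hdual :: "('v::real_normed_vector \<Rightarrow>\<^sub>L 'h::real_inner) \<Rightarrow> 'h \<Rightarrow> ('v \<Rightarrow>\<^sub>L real)" where
  "hdual i h = blinfun_inner_left h o\<^sub>L i"

text \<open>Here u N n stands for u_tau^n with tau = T / N.\<close>

definition ftau :: "(real \<Rightarrow> 'b::real_normed_vector) \<Rightarrow> real \<Rightarrow> nat \<Rightarrow> nat \<Rightarrow> 'b" where
  "ftau f T N n = (let \<tau> = T / real N in
     if n = 1 then (1 / \<tau>) *\<^sub>R integral {0..\<tau>} f
     else (3 / (2 * \<tau>)) *\<^sub>R integral {(real n - 1) * \<tau> .. real n * \<tau>} f
          - (1 / (2 * \<tau>)) *\<^sub>R integral {(real n - 2) * \<tau> .. (real n - 1) * \<tau>} f)"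

text \<open>Piecewise constant interpolant: value u^n on ((n-1)tau, n tau], u^0 at 0.\<close>
definition ubar :: "(nat \<Rightarrow> nat \<Rightarrow> 'v::real_vector) \<Rightarrow> real \<Rightarrow> nat \<Rightarrow> real \<Rightarrow> 'v" where
  "ubar u T N t = (if t \<le> 0 then u N 0 else u N (nat \<lceil>t / (T / real N)\<rceil>))"

definition uint :: "(nat \<Rightarrow> nat \<Rightarrow> 'v::real_vector) \<Rightarrow> real \<Rightarrow> nat \<Rightarrow> real \<Rightarrow> 'v" where
  "uint u T N t = (let \<tau> = T / real N; n = nat \<lceil>t / \<tau>\<rceil> in
     if n \<le> 1 then
       (3/2) *\<^sub>R u N 1 - (1/2) *\<^sub>R u N 0 + ((t - \<tau>) / \<tau>) *\<^sub>R (u N 1 - u N 0)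
     else
       (3/2) *\<^sub>R u N n - (1/2) *\<^sub>R u N (n - 1)
       + ((t - real n * \<tau>) / \<tau>) *\<^sub>R
           ((3/2) *\<^sub>R u N n - 2 *\<^sub>R u N (n - 1) + (1/2) *\<^sub>R u N (n - 2)))"

end

theory Submission
  imports Defs
begin

lemma norm_integrable_from_L2:
  fixes f :: "real \<Rightarrow> 'b::banach"
  assumes fm: "f measurable_on {0..T}" and f2: "(\<lambda>t. (norm (f t))\<^sup>2) integrable_on {0..T}"
  shows "(\<lambda>t. norm (f t)) integrable_on {0..T}"
proof -
  have m: "(norm \<circ> f) measurable_on {0..T}"
    by (rule measurable_on_compose_continuous_0[OF fm]) (auto intro: continuous_intros)
  have "(norm \<circ> f) \<in> borel_measurable (lebesgue_on {0..T})"
    using measurable_on_iff_borel_measurable[THEN iffD1, OF _ m] by simp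
  moreover have "(\<lambda>t. (1 + (norm (f t))\<^sup>2) / 2) integrable_on {0..T}"
    using integrable_cmul[OF integrable_add[OF integrable_const_ivl f2], of "1/2"] by simp
  moreover have "\<bar>(norm \<circ> f) t\<bar> \<le> (1 + (norm (f t))\<^sup>2) / 2" for t
  proof -
    have "0 \<le> (norm (f t) - 1)\<^sup>2" by simp
    then show ?thesis by (simp add: power2_eq_square algebra_simps)
  qed
  moreover have "{0..T} \<in> sets lebesgue" by simp
  ultimately have "(norm \<circ> f) integrable_on {0..T}"
    by (rule measurable_bounded_by_integrable_imp_integrable_real)
  then show ?thesis by (simp add: o_def)
qed

lemma aux_alg: "(d::real) > 0 \<Longrightarrow> 2 * (G / d) * G - d * (G / d)\<^sup>2 = G\<^sup>2 / d"
  by (simp add: field_simps power2_eq_square)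

lemma integral_CS:
  fixes g :: "real \<Rightarrow> real"
  assumes g: "g integrable_on {a..b}" and g2: "(\<lambda>t. (g t)\<^sup>2) integrable_on {a..b}" and ab: "a \<le> b"
  shows "(integral {a..b} g)\<^sup>2 \<le> (b - a) * integral {a..b} (\<lambda>t. (g t)\<^sup>2)"
proof (cases "a = b")
  case True then show ?thesis by simp
next
  case False
  then have ba: "b - a > 0" using ab by simp
  define m where "m = integral {a..b} g / (b - a)"
  have eq: "(\<lambda>t. (g t - m)\<^sup>2) = (\<lambda>t. (g t)\<^sup>2 - (2 * m * g t - m\<^sup>2))"
    by (auto simp: power2_eq_square algebra_simps)
  have i0: "(\<lambda>t. 2 * m * g t) integrable_on {a..b}"
    using integrable_cmul[OF g, of "2*m"] by simp
  have i1: "(\<lambda>t. 2 * m * g t - m\<^sup>2) integrable_on {a..b}"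
    by (rule integrable_diff[OF i0 integrable_const_ivl])
  have "0 \<le> integral {a..b} (\<lambda>t. (g t - m)\<^sup>2)"
  proof (rule Henstock_Kurzweil_Integration.integral_nonneg)
    show "(\<lambda>t. (g t - m)\<^sup>2) integrable_on {a..b}" unfolding eq by (rule integrable_diff[OF g2 i1])
  qed simp
  also have "\<dots> = integral {a..b} (\<lambda>t. (g t)\<^sup>2) - integral {a..b} (\<lambda>t. 2 * m * g t - m\<^sup>2)"
    unfolding eq by (rule Henstock_Kurzweil_Integration.integral_diff[OF g2 i1])
  also have "integral {a..b} (\<lambda>t. 2 * m * g t - m\<^sup>2) = integral {a..b} (\<lambda>t. 2 * m * g t) - integral {a..b} (\<lambda>t. m\<^sup>2)"
    by (rule Henstock_Kurzweil_Integration.integral_diff[OF i0 integrable_const_ivl])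
  also have "integral {a..b} (\<lambda>t. 2 * m * g t) = 2 * m * integral {a..b} g"
    by (rule Henstock_Kurzweil_Integration.integral_mult_right)
  also have "integral {a..b} (\<lambda>t. m\<^sup>2) = (b - a) * m\<^sup>2"
    using ab by simp
  also have "2 * m * integral {a..b} g - (b - a) * m\<^sup>2 = (integral {a..b} g)\<^sup>2 / (b - a)"
    using ba unfolding m_def by (rule aux_alg)
  finally show ?thesis using ba by (simp add: field_simps)
qed

lemma norm_integral_sq_bound:
  fixes f :: "real \<Rightarrow> 'b::banach"
  assumes fm: "f measurable_on {0..T}" and f2: "(\<lambda>t. (norm (f t))\<^sup>2) integrable_on {0..T}"
    and ab: "a \<le> b" and sub: "{a..b} \<subseteq> {0..T}"
  shows "(norm (integral {a..b} f))\<^sup>2 \<le> (b - a) * integral {a..b} (\<lambda>t. (norm (f t))\<^sup>2)"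
proof -
  have n: "(\<lambda>t. norm (f t)) integrable_on {a..b}"
    using norm_integrable_from_L2[OF fm f2] sub integrable_on_subinterval by blast
  have n2: "(\<lambda>t. (norm (f t))\<^sup>2) integrable_on {a..b}"
    using f2 sub integrable_on_subinterval by blast
  have le: "norm (integral {a..b} f) \<le> integral {a..b} (\<lambda>t. norm (f t))"
  proof (cases "f integrable_on {a..b}")
    case True then show ?thesis using n by (intro Henstock_Kurzweil_Integration.integral_norm_bound_integral) auto
  next
    case False then show ?thesis using n by (simp add: not_integrable_integral Henstock_Kurzweil_Integration.integral_nonneg)
  qed
  have "(norm (integral {a..b} f))\<^sup>2 \<le> (integral {a..b} (\<lambda>t. norm (f t)))\<^sup>2"
    using le by (intro power_mono) auto
  also have "\<dots> \<le> (b - a) * integral {a..b} (\<lambda>t. (norm (f t))\<^sup>2)"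
    by (rule integral_CS[OF n n2 ab])
  finally show ?thesis .
qed

lemma integral_sum_intervals:
  fixes h :: "real \<Rightarrow> real"
  assumes tau: "\<tau> > 0" and hi: "h integrable_on {0..real N * \<tau>}"
  shows "(\<Sum>n=1..N. integral {(real n - 1) * \<tau>..real n * \<tau>} h) = integral {0..real N * \<tau>} h"
  using hi
proof (induction N)
  case 0 then show ?case by simp
next
  case (Suc N)
  have sub: "{0..real N * \<tau>} \<subseteq> {0..real (Suc N) * \<tau>}"
    using tau by (auto simp: algebra_simps)
  have "h integrable_on {0..real N * \<tau>}"
    using Suc.prems sub integrable_on_subinterval by blast
  then have IH: "(\<Sum>n=1..N. integral {(real n - 1) * \<tau>..real n * \<tau>} h) = integral {0..real N * \<tau>} h"
    by (rule Suc.IH)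
  have "integral {0..real N * \<tau>} h + integral {real N * \<tau>..real (Suc N) * \<tau>} h
        = integral {0..real (Suc N) * \<tau>} h"
  proof (rule Henstock_Kurzweil_Integration.integral_combine)
    show "0 \<le> real N * \<tau>" using tau by simp
    show "real N * \<tau> \<le> real (Suc N) * \<tau>" using tau by (simp add: algebra_simps)
  qed (use Suc.prems in auto)
  then show ?case using IH by simp
qed

lemma bdf2_id:
  fixes a b c :: "'h::real_inner"
  shows "4 * inner ((3/2) *\<^sub>R a - 2 *\<^sub>R b + (1/2) *\<^sub>R c) a =
    (norm a)\<^sup>2 - (norm b)\<^sup>2 + (norm (2 *\<^sub>R a - b))\<^sup>2 - (norm (2 *\<^sub>R b - c))\<^sup>2 + (norm (a - 2 *\<^sub>R b + c))\<^sup>2"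
  unfolding power2_norm_eq_inner
  by (simp add: inner_diff_left inner_diff_right inner_add_left inner_add_right inner_commute[of b a]
      inner_commute[of c a] inner_commute[of c b] algebra_simps)

lemma bdf1_id:
  fixes a b :: "'h::real_inner"
  shows "2 * inner (a - b) a = (norm a)\<^sup>2 - (norm b)\<^sup>2 + (norm (a - b))\<^sup>2"
  unfolding power2_norm_eq_inner
  by (simp add: inner_diff_left inner_diff_right inner_commute[of b a] algebra_simps)

lemma step_ineq_real:
  fixes X p q r fn \<epsilon> C d \<alpha> \<beta> :: real
  assumes r: "r \<le> \<epsilon> * p + C * q" and eps: "3 * d * \<epsilon>\<^sup>2 \<le> \<alpha> / 4"
    and main: "X + (\<alpha> * p\<^sup>2 - \<beta> * q\<^sup>2) - d * (1 + r) * r \<le> fn * p"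
    and nn: "0 \<le> p" "0 \<le> q" "0 \<le> r" "0 \<le> fn" "0 < d" "0 < \<alpha>" "0 \<le> \<epsilon>" "0 \<le> C" "0 \<le> \<beta>"
  shows "X + (\<alpha>/2) * p\<^sup>2 \<le> (d/2 + \<beta> + 3 * d * C\<^sup>2 + 1/\<alpha>) * (1 + q\<^sup>2 + fn\<^sup>2)"
proof -
  have r2: "r\<^sup>2 \<le> 2 * \<epsilon>\<^sup>2 * p\<^sup>2 + 2 * C\<^sup>2 * q\<^sup>2"
  proof -
    have "r\<^sup>2 \<le> (\<epsilon> * p + C * q)\<^sup>2" using r nn by (intro power_mono) auto
    also have "\<dots> \<le> 2 * \<epsilon>\<^sup>2 * p\<^sup>2 + 2 * C\<^sup>2 * q\<^sup>2"
      using sum_squares_ge_zero[of "\<epsilon> * p - C * q" 0]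
      by (simp add: power2_eq_square algebra_simps)
    finally show ?thesis .
  qed
  have a1: "d * r \<le> d / 2 + d / 2 * r\<^sup>2"
  proof -
    have "0 \<le> d / 2 * (r - 1)\<^sup>2" using nn by simp
    then show ?thesis by (simp add: power2_eq_square algebra_simps)
  qed
  have a2: "(3 * d / 2) * r\<^sup>2 \<le> (3 * d / 2) * (2 * \<epsilon>\<^sup>2 * p\<^sup>2 + 2 * C\<^sup>2 * q\<^sup>2)"
    using r2 nn by (intro mult_left_mono) auto
  have a3: "3 * d * \<epsilon>\<^sup>2 * p\<^sup>2 \<le> \<alpha> / 4 * p\<^sup>2"
    using eps nn by (intro mult_right_mono) auto
  have a4: "fn * p \<le> \<alpha> / 4 * p\<^sup>2 + fn\<^sup>2 / \<alpha>"
  proof -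
    have "0 \<le> (\<alpha> / 2 * p - fn)\<^sup>2 / \<alpha>" using nn by simp
    also have "(\<alpha> / 2 * p - fn)\<^sup>2 / \<alpha> = \<alpha> / 4 * p\<^sup>2 + fn\<^sup>2 / \<alpha> - fn * p"
      using nn by (simp add: power2_eq_square field_simps)
    finally show ?thesis by simp
  qed
  have b1: "\<beta> * q\<^sup>2 + 3 * d * C\<^sup>2 * q\<^sup>2 \<le> (d/2 + \<beta> + 3 * d * C\<^sup>2 + 1/\<alpha>) * q\<^sup>2"
  proof -
    have "\<beta> * q\<^sup>2 + 3 * d * C\<^sup>2 * q\<^sup>2 = (\<beta> + 3 * d * C\<^sup>2) * q\<^sup>2" by (simp add: algebra_simps)
    also have "\<dots> \<le> (d/2 + \<beta> + 3 * d * C\<^sup>2 + 1/\<alpha>) * q\<^sup>2" using nn by (intro mult_right_mono) auto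
    finally show ?thesis .
  qed
  have b2: "d / 2 \<le> (d/2 + \<beta> + 3 * d * C\<^sup>2 + 1/\<alpha>)" using nn by simp
  have b3: "fn\<^sup>2 / \<alpha> \<le> (d/2 + \<beta> + 3 * d * C\<^sup>2 + 1/\<alpha>) * fn\<^sup>2"
  proof -
    have "fn\<^sup>2 / \<alpha> = (1/\<alpha>) * fn\<^sup>2" by simp
    also have "\<dots> \<le> (d/2 + \<beta> + 3 * d * C\<^sup>2 + 1/\<alpha>) * fn\<^sup>2" using nn by (intro mult_right_mono) auto
    finally show ?thesis .
  qed
  have m: "X + \<alpha> * p\<^sup>2 - \<beta> * q\<^sup>2 - (d * r + d * r\<^sup>2) \<le> fn * p"
  proof -
    have "d * (1 + r) * r = d * r + d * r\<^sup>2" by (simp add: power2_eq_square algebra_simps)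
    then show ?thesis using main by simp
  qed
  have a2': "d / 2 * r\<^sup>2 + d * r\<^sup>2 \<le> 3 * d * \<epsilon>\<^sup>2 * p\<^sup>2 + 3 * d * C\<^sup>2 * q\<^sup>2"
  proof -
    have "d / 2 * r\<^sup>2 + d * r\<^sup>2 = (3 * d / 2) * r\<^sup>2" by simp
    also have "\<dots> \<le> (3 * d / 2) * (2 * \<epsilon>\<^sup>2 * p\<^sup>2 + 2 * C\<^sup>2 * q\<^sup>2)" by (rule a2)
    also have "\<dots> = 3 * d * \<epsilon>\<^sup>2 * p\<^sup>2 + 3 * d * C\<^sup>2 * q\<^sup>2" by (simp add: algebra_simps)
    finally show ?thesis .
  qed
  have K: "(d/2 + \<beta> + 3 * d * C\<^sup>2 + 1/\<alpha>) * (1 + q\<^sup>2 + fn\<^sup>2) =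
     (d/2 + \<beta> + 3 * d * C\<^sup>2 + 1/\<alpha>) + (d/2 + \<beta> + 3 * d * C\<^sup>2 + 1/\<alpha>) * q\<^sup>2 + (d/2 + \<beta> + 3 * d * C\<^sup>2 + 1/\<alpha>) * fn\<^sup>2"
    by (simp add: algebra_simps)
  show ?thesis unfolding K using m a1 a2' a3 a4 b1 b2 b3 by linarith
qed

lemma gronwall_disc:
  fixes E G :: "nat \<Rightarrow> real"
  assumes x: "0 \<le> x" "x \<le> 1/2" and G: "\<And>k. 0 \<le> G k" and E0: "\<And>k. 0 \<le> E k"
    and step: "\<And>n. 2 \<le> n \<Longrightarrow> n \<le> N \<Longrightarrow> (1 - x) * E n \<le> E (n - 1) + G n"
  shows "\<And>n. 1 \<le> n \<Longrightarrow> n \<le> N \<Longrightarrow> E n \<le> exp (2 * x * real N) * (E 1 + (\<Sum>k=2..N. G k))"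
proof -
  have st: "E n \<le> (1 + 2 * x) * (E (n - 1) + G n)" if "2 \<le> n" "n \<le> N" for n
  proof -
    have "E n \<le> (1 + 2 * x) * ((1 - x) * E n)"
    proof -
      have "1 \<le> (1 + 2 * x) * (1 - x)" using x mult_left_mono[of "2*x" 1 x] by (simp add: algebra_simps power2_eq_square)
      then show ?thesis using E0[of n] by (smt (verit) mult.assoc mult_right_mono mult_cancel_right1)
    qed
    also have "\<dots> \<le> (1 + 2 * x) * (E (n - 1) + G n)" using step[OF that] x by (intro mult_left_mono) auto
    finally show ?thesis .
  qed
  have claim: "n \<le> N \<longrightarrow> E n \<le> (1 + 2 * x) ^ (n - 1) * (E 1 + (\<Sum>k=2..n. G k))" if "1 \<le> n" for n
    using that
  proof (induction n rule: nat_induct_at_least)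
    case base then show ?case by simp
  next
    case (Suc n)
    show ?case
    proof
      assume le: "Suc n \<le> N"
      have IH: "E n \<le> (1 + 2 * x) ^ (n - 1) * (E 1 + (\<Sum>k=2..n. G k))" using Suc le by simp
      have "(1 + 2 * x) ^ 1 \<le> (1 + 2 * x) ^ n"
        by (rule power_increasing) (use Suc.hyps x in auto)
      then have pw: "1 + 2 * x \<le> (1 + 2 * x) ^ n" by simp
      have n1: "\<not> Suc n < 2" using Suc.hyps by simp
      have S: "(\<Sum>k=2..Suc n. G k) = (\<Sum>k=2..n. G k) + G (Suc n)"
        using n1 by (simp only: sum.cl_ivl_Suc if_False)
      have "E (Suc n) \<le> (1 + 2 * x) * (E n + G (Suc n))" using st[of "Suc n"] Suc.hyps le by simp
      also have "\<dots> \<le> (1 + 2 * x) * ((1 + 2 * x) ^ (n - 1) * (E 1 + (\<Sum>k=2..n. G k)) + G (Suc n))"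
        using IH x by (intro mult_left_mono add_right_mono) auto
      also have "\<dots> = (1 + 2 * x) ^ n * (E 1 + (\<Sum>k=2..n. G k)) + (1 + 2 * x) * G (Suc n)"
        using Suc.hyps by (cases n) (auto simp: algebra_simps)
      also have "\<dots> \<le> (1 + 2 * x) ^ n * (E 1 + (\<Sum>k=2..n. G k)) + (1 + 2 * x) ^ n * G (Suc n)"
        using pw G[of "Suc n"] by (intro add_left_mono mult_right_mono) auto
      also have "\<dots> = (1 + 2 * x) ^ (Suc n - 1) * (E 1 + (\<Sum>k=2..Suc n. G k))"
        unfolding S by (simp add: algebra_simps del: sum.cl_ivl_Suc)
      finally show "E (Suc n) \<le> (1 + 2 * x) ^ (Suc n - 1) * (E 1 + (\<Sum>k=2..Suc n. G k))" .
    qed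
  qed
  fix n assume n: "1 \<le> n" "n \<le> N"
  have "E n \<le> (1 + 2 * x) ^ (n - 1) * (E 1 + (\<Sum>k=2..n. G k))" using claim n by simp
  also have "\<dots> \<le> exp (2 * x * real N) * (E 1 + (\<Sum>k=2..N. G k))"
  proof (rule mult_mono)
    have "(1 + 2 * x) ^ (n - 1) \<le> (1 + 2 * x) ^ N" using x n by (intro power_increasing) auto
    also have "\<dots> \<le> exp (2 * x) ^ N" using x by (intro power_mono) (auto simp: exp_ge_add_one_self)
    also have "\<dots> = exp (2 * x * real N)" by (simp add: exp_of_nat_mult[symmetric] mult.commute)
    finally show "(1 + 2 * x) ^ (n - 1) \<le> exp (2 * x * real N)" .
    show "E 1 + (\<Sum>k=2..n. G k) \<le> E 1 + (\<Sum>k=2..N. G k)"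
      using n G by (intro add_left_mono sum_mono2) auto
    show "0 \<le> exp (2 * x * real N)" by simp
    show "0 \<le> E 1 + (\<Sum>k=2..n. G k)" using E0 G by (intro add_nonneg_nonneg sum_nonneg) auto
  qed
  finally show "E n \<le> exp (2 * x * real N) * (E 1 + (\<Sum>k=2..N. G k))" .
qed

lemma rec_sum:
  fixes a d :: "nat \<Rightarrow> real"
  assumes a0: "\<And>n. 0 \<le> a n"
    and rec: "\<And>n. 2 \<le> n \<Longrightarrow> n \<le> M \<Longrightarrow> a n \<le> (2/3) * d n + (1/3) * a (n - 1)"
  shows "\<And>N. 1 \<le> N \<Longrightarrow> N \<le> M \<Longrightarrow> (\<Sum>n=2..N. (a n)\<^sup>2) + (a N)\<^sup>2 / 2 \<le> (\<Sum>n=2..N. (d n)\<^sup>2) + (a 1)\<^sup>2 / 2"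
proof -
  fix N :: nat assume N: "1 \<le> N" "N \<le> M"
  show "(\<Sum>n=2..N. (a n)\<^sup>2) + (a N)\<^sup>2 / 2 \<le> (\<Sum>n=2..N. (d n)\<^sup>2) + (a 1)\<^sup>2 / 2"
    using N
  proof (induction N rule: nat_induct_at_least)
    case base then show ?case by simp
  next
    case (Suc n)
    have n1: "\<not> Suc n < 2" using Suc.hyps by simp
    have IH: "(\<Sum>k=2..n. (a k)\<^sup>2) + (a n)\<^sup>2 / 2 \<le> (\<Sum>k=2..n. (d k)\<^sup>2) + (a 1)\<^sup>2 / 2"
      using Suc by simp
    have r: "a (Suc n) \<le> (2/3) * d (Suc n) + (1/3) * a n" using rec[of "Suc n"] Suc n1 by simp
    have "(a (Suc n))\<^sup>2 \<le> ((2/3) * d (Suc n) + (1/3) * a n)\<^sup>2"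
      using r a0[of "Suc n"] by (intro power_mono) auto
    also have "\<dots> \<le> (2/3) * (d (Suc n))\<^sup>2 + (1/3) * (a n)\<^sup>2"
    proof -
      have "0 \<le> (2/9) * (d (Suc n) - a n)\<^sup>2" by simp
      then show ?thesis by (simp add: power2_eq_square algebra_simps)
    qed
    finally have st: "(a (Suc n))\<^sup>2 \<le> (2/3) * (d (Suc n))\<^sup>2 + (1/3) * (a n)\<^sup>2" .
    have S1: "(\<Sum>k=2..Suc n. (a k)\<^sup>2) = (\<Sum>k=2..n. (a k)\<^sup>2) + (a (Suc n))\<^sup>2"
      using n1 by (simp only: sum.cl_ivl_Suc if_False)
    have S2: "(\<Sum>k=2..Suc n. (d k)\<^sup>2) = (\<Sum>k=2..n. (d k)\<^sup>2) + (d (Suc n))\<^sup>2"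
      using n1 by (simp only: sum.cl_ivl_Suc if_False)
    show ?case unfolding S1 S2 using IH st by linarith
  qed
qed

lemma sum_shift_le:
  fixes h :: "nat \<Rightarrow> real"
  assumes "h 0 = 0" "\<And>n. 0 \<le> h n"
  shows "(\<Sum>n=1..N. h (n - 1)) \<le> (\<Sum>n=1..N. h n)"
proof -
  have "(\<Sum>n=1..N. h (n - 1)) = (\<Sum>n=1..N. h n) - h N"
    by (induction N) (simp_all add: assms(1))
  then show ?thesis using assms(2)[of N] by simp
qed

lemma ceil_idx:
  fixes \<tau> t :: real
  assumes "\<tau> > 0" "(real n - 1) * \<tau> < t" "t \<le> real n * \<tau>"
  shows "nat \<lceil>t / \<tau>\<rceil> = n"
proof -
  have "real n - 1 < t / \<tau>" using assms by (simp add: field_simps)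
  moreover have "t / \<tau> \<le> real n" using assms by (simp add: field_simps)
  ultimately have "\<lceil>t / \<tau>\<rceil> = int n" by (intro ceiling_unique) auto
  then show ?thesis by simp
qed

lemma integral_nonneg_any:
  fixes g :: "real \<Rightarrow> real"
  assumes "\<And>t. t \<in> S \<Longrightarrow> 0 \<le> g t"
  shows "0 \<le> integral S g"
proof (cases "g integrable_on S")
  case True then show ?thesis using assms by (rule Henstock_Kurzweil_Integration.integral_nonneg)
next
  case False then show ?thesis by (simp add: not_integrable_integral)
qed

lemma step_integral:
  fixes g :: "real \<Rightarrow> real" and c :: "nat \<Rightarrow> real"
  assumes tau: "\<tau> > 0"
    and bnd: "\<And>n t. 1 \<le> n \<Longrightarrow> n \<le> N \<Longrightarrow> (real n - 1) * \<tau> < t \<Longrightarrow> t \<le> real n * \<tau> \<Longrightarrow> g t \<le> c n"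
    and c0: "\<And>n. 0 \<le> c n"
  shows "integral {0..real N * \<tau>} g \<le> \<tau> * (\<Sum>n=1..N. c n)"
proof (cases "g integrable_on {0..real N * \<tau>}")
  case False then show ?thesis using c0 tau by (simp add: not_integrable_integral sum_nonneg)
next
  case True
  have "integral {0..real N * \<tau>} g = (\<Sum>n=1..N. integral {(real n - 1) * \<tau>..real n * \<tau>} g)"
    using integral_sum_intervals[OF tau True] by simp
  also have "\<dots> \<le> (\<Sum>n=1..N. \<tau> * c n)"
  proof (rule sum_mono)
    fix n assume n: "n \<in> {1..N}"
    let ?a = "(real n - 1) * \<tau>" and ?b = "real n * \<tau>"
    have ab: "?a \<le> ?b" using tau by (simp add: algebra_simps)
    have sub: "{?a..?b} \<subseteq> {0..real N * \<tau>}" using n tau by (auto simp: algebra_simps)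
    have gi: "g integrable_on {?a..?b}" using True sub integrable_on_subinterval by blast
    define g' where "g' t = (if t = ?a then c n else g t)" for t
    have neg: "negligible {?a}" by simp
    have eqi: "integral {?a..?b} g' = integral {?a..?b} g"
      by (rule integral_spike[OF neg]) (auto simp: g'_def)
    have gi': "g' integrable_on {?a..?b}"
      by (rule integrable_spike[OF gi neg]) (auto simp: g'_def)
    have "integral {?a..?b} g' \<le> integral {?a..?b} (\<lambda>t. c n)"
    proof (rule integral_le[OF gi' integrable_const_ivl])
      fix t assume t: "t \<in> {?a..?b}"
      show "g' t \<le> c n"
      proof (cases "t = ?a")
        case True then show ?thesis by (simp add: g'_def)
      next
        case False then have "?a < t" using t by auto
        then show ?thesis using bnd[of n t] n t by (simp add: g'_def)
      qed
    qed
    also have "\<dots> = \<tau> * c n" using ab by (simp add: algebra_simps)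
    finally show "integral {?a..?b} g \<le> \<tau> * c n" using eqi by simp
  qed
  also have "\<dots> = \<tau> * (\<Sum>n=1..N. c n)" by (simp add: sum_distrib_left)
  finally show ?thesis .
qed

lemma ehrling:
  fixes i1 :: "'v::real_normed_vector \<Rightarrow>\<^sub>L 'z::real_normed_vector" and jZH :: "'z \<Rightarrow>\<^sub>L 'h::real_normed_vector"
  assumes cpt: "compact_op i1" and inj: "inj (blinfun_apply jZH)" and eps: "\<epsilon> > 0"
  shows "\<exists>C. \<forall>v. norm (i1 v) \<le> \<epsilon> * norm v + C * norm (jZH (i1 v))"
proof (rule ccontr)
  assume "\<not> ?thesis"
  then have "\<forall>n::nat. \<exists>v. norm (i1 v) > \<epsilon> * norm v + real n * norm (jZH (i1 v))"
    by (metis not_le)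
  then obtain v where v: "\<And>n. norm (i1 (v n)) > \<epsilon> * norm (v n) + real n * norm (jZH (i1 (v n)))"
    by metis
  have vnz: "v n \<noteq> 0" for n
  proof
    assume "v n = 0" then show False using v[of n] by simp
  qed
  define w where "w n = (1 / norm (v n)) *\<^sub>R v n" for n
  have nw: "norm (w n) = 1" for n using vnz[of n] by (simp add: w_def)
  have wi: "norm (i1 (w n)) > \<epsilon> + real n * norm (jZH (i1 (w n)))" for n
  proof -
    have p: "norm (v n) > 0" using vnz[of n] by simp
    have "i1 (w n) = (1 / norm (v n)) *\<^sub>R i1 (v n)" by (simp add: w_def blinfun.scaleR_right)
    then have e1: "norm (i1 (w n)) = norm (i1 (v n)) / norm (v n)" and
      e2: "norm (jZH (i1 (w n))) = norm (jZH (i1 (v n))) / norm (v n)"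
      using p by (simp_all add: blinfun.scaleR_right)
    have "\<epsilon> * norm (v n) + real n * norm (jZH (i1 (v n))) < norm (i1 (v n))" by (rule v)
    then have "(\<epsilon> * norm (v n) + real n * norm (jZH (i1 (v n)))) / norm (v n) < norm (i1 (v n)) / norm (v n)"
      using p by (simp add: divide_strict_right_mono)
    then show ?thesis using p by (simp add: e1 e2 add_divide_distrib)
  qed
  have inK: "i1 (w n) \<in> closure (blinfun_apply i1 ` cball 0 1)" for n
    by (rule closure_subset[THEN subsetD], rule imageI) (simp add: nw)
  have K: "compact (closure (blinfun_apply i1 ` cball 0 1))" using cpt by (simp add: compact_op_def)
  obtain l r where l: "l \<in> closure (blinfun_apply i1 ` cball 0 1)" and r: "strict_mono r"
    and lim: "((\<lambda>n. i1 (w n)) \<circ> r) \<longlonglongrightarrow> l"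
    using K[unfolded compact_def, rule_format, of "\<lambda>n. i1 (w n)"] inK by blast
  have wi': "\<epsilon> \<le> norm (i1 (w n))" for n
    using wi[of n] by (smt (verit) mult_nonneg_nonneg of_nat_0_le_iff norm_ge_zero)
  have "\<epsilon> \<le> norm l"
  proof (rule tendsto_lowerbound[OF tendsto_norm[OF lim]])
    show "\<forall>\<^sub>F n in sequentially. \<epsilon> \<le> norm (((\<lambda>n. i1 (w n)) \<circ> r) n)"
      using wi' by (simp add: o_def)
  qed simp
  have small: "norm (jZH (i1 (w n))) \<le> norm i1 / real n" if "n \<ge> 1" for n
  proof -
    have "real n * norm (jZH (i1 (w n))) \<le> norm (i1 (w n))" using wi[of n] eps by linarith
    also have "\<dots> \<le> norm i1" using norm_blinfun[of i1 "w n"] nw[of n] by simp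
    finally show ?thesis using that by (simp add: field_simps)
  qed
  have z: "((\<lambda>n. norm i1 / real n) \<circ> r) \<longlonglongrightarrow> 0"
    using LIMSEQ_subseq_LIMSEQ[OF lim_const_over_n[where 'a=real, of "norm i1"] r] .
  have "(\<lambda>n. jZH (i1 (w (r n)))) \<longlonglongrightarrow> 0"
  proof (rule Lim_null_comparison[OF _ z])
    show "\<forall>\<^sub>F n in sequentially. norm (jZH (i1 (w (r n)))) \<le> ((\<lambda>n. norm i1 / real n) \<circ> r) n"
      using eventually_ge_at_top[of 1]
    proof eventually_elim
      case (elim n)
      have "r n \<ge> n" using seq_suble[OF r] by simp
      then show ?case using small[of "r n"] elim by simp
    qed
  qed
  moreover have "(\<lambda>n. jZH (i1 (w (r n)))) \<longlonglongrightarrow> jZH l"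
    using blinfun.tendsto[OF tendsto_const lim, of jZH] by (simp add: o_def)
  ultimately have "jZH l = 0" using LIMSEQ_unique by blast
  then have "l = 0" using inj blinfun.zero_right by (metis injD)
  then show False using \<open>\<epsilon> \<le> norm l\<close> eps by simp
qed

lemma ehrling_iota:
  fixes i1 :: "'v::real_normed_vector \<Rightarrow>\<^sub>L 'z::real_normed_vector" and jZH :: "'z \<Rightarrow>\<^sub>L 'h::real_normed_vector"
    and i2 :: "'z \<Rightarrow>\<^sub>L 'u::real_normed_vector"
  assumes cpt: "compact_op i1" and inj: "inj (blinfun_apply jZH)" and eps: "\<epsilon> > 0"
    and i_factor: "i = jZH o\<^sub>L i1" and iota_factor: "iota = i2 o\<^sub>L i1"
  shows "\<exists>C. \<forall>v. norm (iota v) \<le> \<epsilon> * norm v + C * norm (i v)"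
proof -
  define e where "e = \<epsilon> / (norm i2 + 1)"
  have e: "e > 0" using eps by (simp add: e_def add_nonneg_pos)
  obtain C where C: "\<And>v. norm (i1 v) \<le> e * norm v + C * norm (jZH (i1 v))"
    using ehrling[OF cpt inj e] by blast
  have en: "norm i2 * e \<le> \<epsilon>"
  proof -
    have "norm i2 * e \<le> (norm i2 + 1) * e" using e by simp
    also have "\<dots> = \<epsilon>" 
    proof -
      have p: "norm i2 + 1 \<noteq> 0" "1 + norm i2 \<noteq> 0" using norm_ge_zero[of i2] by linarith+
      show ?thesis unfolding e_def using p by (simp add: field_simps)
    qed
    finally show ?thesis .
  qed
  show ?thesis
  proof (intro exI allI)
    fix v
    have "norm (iota v) = norm (i2 (i1 v))" by (simp add: iota_factor)
    also have "\<dots> \<le> norm i2 * norm (i1 v)" by (rule norm_blinfun)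
    also have "\<dots> \<le> norm i2 * (e * norm v + C * norm (i v))"
      using C[of v] by (intro mult_left_mono) (simp_all add: i_factor)
    also have "\<dots> = (norm i2 * e) * norm v + (norm i2 * C) * norm (i v)" by (simp add: algebra_simps)
    also have "\<dots> \<le> \<epsilon> * norm v + (norm i2 * C) * norm (i v)"
      using en by (intro add_right_mono mult_right_mono) simp_all
    finally show "norm (iota v) \<le> \<epsilon> * norm v + (norm i2 * C) * norm (i v)" .
  qed
qed

lemma hd_apply: "blinfun_apply (hdual i h) v = inner (i v) h"
  by (simp add: hdual_def)

lemma hd_add: "hdual i (x + y) = hdual i x + hdual i y"
  by (rule blinfun_eqI) (simp add: hd_apply inner_add_right plus_blinfun.rep_eq)

lemma hd_diff: "hdual i (x - y) = hdual i x - hdual i y"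
  by (rule blinfun_eqI) (simp add: hd_apply inner_diff_right minus_blinfun.rep_eq)

lemma hd_scale: "hdual i (c *\<^sub>R x) = c *\<^sub>R hdual i x"
  by (rule blinfun_eqI) (simp add: hd_apply scaleR_blinfun.rep_eq)

lemma tested_step:
  fixes i :: "'v::real_normed_vector \<Rightarrow>\<^sub>L 'h::real_inner"
    and A :: "'v \<Rightarrow> ('v \<Rightarrow>\<^sub>L real)" and iota :: "'v \<Rightarrow>\<^sub>L 'u::real_normed_vector"
    and \<xi>0 :: "'u \<Rightarrow>\<^sub>L real"
  assumes eq: "(1 / \<tau>) *\<^sub>R hdual i (i D) + A x + (\<xi>0 o\<^sub>L iota) = g"
    and tau: "\<tau> > 0"
    and xi: "norm \<xi>0 \<le> d * (1 + norm (iota x))"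
    and Ab: "norm (A x) \<le> a + b * norm x"
    and Ac: "A x x \<ge> \<alpha> * (norm x)\<^sup>2 - \<beta> * (norm (i x))\<^sup>2"
    and CE: "norm (iota x) \<le> \<epsilon> * norm x + C * norm (i x)"
    and eps: "3 * d * \<epsilon>\<^sup>2 \<le> \<alpha> / 4"
    and pos: "0 < d" "0 < \<alpha>" "0 \<le> \<epsilon>" "0 \<le> C" "0 \<le> \<beta>"
  shows "(1 / \<tau>) * inner (i D) (i x) + (\<alpha>/2) * (norm x)\<^sup>2
           \<le> (d/2 + \<beta> + 3 * d * C\<^sup>2 + 1/\<alpha>) * (1 + (norm (i x))\<^sup>2 + (norm g)\<^sup>2)"
    and "norm (hdual i (i D)) \<le> \<tau> * (norm g + (a + d * norm iota) + (b + d * (norm iota)\<^sup>2) * norm x)"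
proof -
  have app: "(1 / \<tau>) * inner (i x) (i D) + A x x + \<xi>0 (iota x) = g x"
  proof -
    have "blinfun_apply ((1 / \<tau>) *\<^sub>R hdual i (i D) + A x + (\<xi>0 o\<^sub>L iota)) x = blinfun_apply g x"
      using eq by simp
    then show ?thesis by (simp add: hd_apply plus_blinfun.rep_eq scaleR_blinfun.rep_eq)
  qed
  have xb: "\<bar>\<xi>0 (iota x)\<bar> \<le> d * (1 + norm (iota x)) * norm (iota x)"
  proof -
    have "\<bar>\<xi>0 (iota x)\<bar> \<le> norm \<xi>0 * norm (iota x)" using norm_blinfun[of \<xi>0 "iota x"] by simp
    also have "\<dots> \<le> d * (1 + norm (iota x)) * norm (iota x)" using xi by (intro mult_right_mono) auto
    finally show ?thesis .
  qed
  have gb: "g x \<le> norm g * norm x" using norm_blinfun[of g x] by simp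
  have main: "(1 / \<tau>) * inner (i D) (i x) + (\<alpha> * (norm x)\<^sup>2 - \<beta> * (norm (i x))\<^sup>2)
      - d * (1 + norm (iota x)) * norm (iota x) \<le> norm g * norm x"
    using app xb gb Ac by (simp add: inner_commute)
  show "(1 / \<tau>) * inner (i D) (i x) + (\<alpha>/2) * (norm x)\<^sup>2
           \<le> (d/2 + \<beta> + 3 * d * C\<^sup>2 + 1/\<alpha>) * (1 + (norm (i x))\<^sup>2 + (norm g)\<^sup>2)"
    by (rule step_ineq_real[OF CE eps main]) (use pos in auto)
  have "hdual i (i D) = \<tau> *\<^sub>R (g - A x - (\<xi>0 o\<^sub>L iota))"
  proof -
    have "(1 / \<tau>) *\<^sub>R hdual i (i D) = g - A x - (\<xi>0 o\<^sub>L iota)" using eq by (simp add: algebra_simps)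
    then have "\<tau> *\<^sub>R ((1 / \<tau>) *\<^sub>R hdual i (i D)) = \<tau> *\<^sub>R (g - A x - (\<xi>0 o\<^sub>L iota))" by simp
    then show ?thesis using tau by simp
  qed
  then have "norm (hdual i (i D)) = \<tau> * norm (g - A x - (\<xi>0 o\<^sub>L iota))" using tau by simp
  also have "\<dots> \<le> \<tau> * (norm g + norm (A x) + norm (\<xi>0 o\<^sub>L iota))"
    using tau by (intro mult_left_mono) (auto intro: norm_triangle_le_diff order.trans[OF norm_triangle_ineq4] simp: norm_triangle_ineq4)
  also have "\<dots> \<le> \<tau> * (norm g + (a + d * norm iota) + (b + d * (norm iota)\<^sup>2) * norm x)"
  proof (rule mult_left_mono)
    have "norm (\<xi>0 o\<^sub>L iota) \<le> norm \<xi>0 * norm iota" by (rule norm_blinfun_compose)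
    also have "\<dots> \<le> d * (1 + norm (iota x)) * norm iota" using xi by (intro mult_right_mono) auto
    also have "\<dots> \<le> d * (1 + norm iota * norm x) * norm iota"
      using pos norm_blinfun[of iota x] by (intro mult_right_mono mult_left_mono) auto
    finally have "norm (\<xi>0 o\<^sub>L iota) \<le> d * (1 + norm iota * norm x) * norm iota" .
    then show "norm g + norm (A x) + norm (\<xi>0 o\<^sub>L iota) \<le> norm g + (a + d * norm iota) + (b + d * (norm iota)\<^sup>2) * norm x"
      using Ab by (simp add: algebra_simps power2_eq_square)
  qed (use tau in simp)
  finally show "norm (hdual i (i D)) \<le> \<tau> * (norm g + (a + d * norm iota) + (b + d * (norm iota)\<^sup>2) * norm x)" .
qed

lemma tele:
  fixes h :: "nat \<Rightarrow> real"
  assumes "1 \<le> N"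
  shows "(\<Sum>n=2..N. (h (n - 1) - h n)) = h 1 - h N"
  using assms
proof (induction N rule: nat_induct_at_least)
  case base then show ?case by simp
next
  case (Suc n)
  have n1: "\<not> Suc n < 2" using Suc.hyps by simp
  have "(\<Sum>k=2..Suc n. (h (k - 1) - h k)) = (\<Sum>k=2..n. (h (k - 1) - h k)) + (h n - h (Suc n))"
    using n1 by (simp only: sum.cl_ivl_Suc if_False) simp
  then show ?case using Suc.IH by simp
qed

lemma fbn_real:
  fixes \<tau> x y fv E1 E0 :: real
  assumes tau: "\<tau> > 0" and nn: "0 \<le> x" "0 \<le> y" "0 \<le> fv"
    and fvb: "fv \<le> 3 / (2 * \<tau>) * x + 1 / (2 * \<tau>) * y"
    and xb: "x\<^sup>2 \<le> \<tau> * E1" and yb: "y\<^sup>2 \<le> \<tau> * E0"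
  shows "\<tau> * fv\<^sup>2 \<le> 9/2 * E1 + 1/2 * E0"
proof -
  have "2 * \<tau> * fv \<le> 2 * \<tau> * (3 / (2 * \<tau>) * x + 1 / (2 * \<tau>) * y)"
    using fvb tau by (intro mult_left_mono) auto
  also have "\<dots> = 3 * x + y" using tau by (simp add: field_simps)
  finally have a: "2 * \<tau> * fv \<le> 3 * x + y" .
  have "(2 * \<tau> * fv)\<^sup>2 \<le> (3 * x + y)\<^sup>2" using a nn tau by (intro power_mono) auto
  also have "\<dots> \<le> 18 * x\<^sup>2 + 2 * y\<^sup>2"
    using sum_squares_ge_zero[of "3 * x - y" 0] by (simp add: power2_eq_square algebra_simps)
  also have "\<dots> \<le> 18 * (\<tau> * E1) + 2 * (\<tau> * E0)" using xb yb by simp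
  finally have b: "4 * \<tau> * (\<tau> * fv\<^sup>2) \<le> 4 * \<tau> * (9/2 * E1 + 1/2 * E0)"
    by (simp add: power2_eq_square algebra_simps)
  show ?thesis using b tau by simp
qed

lemma sq3:
  fixes X \<tau> f c e p :: real
  assumes "0 \<le> X" "X \<le> \<tau> * (f + c + e * p)" "\<tau> > 0" "0 \<le> f" "0 \<le> c" "0 \<le> e" "0 \<le> p"
  shows "X\<^sup>2 \<le> 3 * \<tau> * (\<tau> * f\<^sup>2) + 3 * \<tau>\<^sup>2 * c\<^sup>2 + 3 * e\<^sup>2 * \<tau> * (\<tau> * p\<^sup>2)"
proof -
  have "X\<^sup>2 \<le> (\<tau> * (f + c + e * p))\<^sup>2" using assms by (intro power_mono) auto
  also have "\<dots> = \<tau>\<^sup>2 * (f + c + e * p)\<^sup>2" by (simp add: power_mult_distrib)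
  also have "\<dots> \<le> \<tau>\<^sup>2 * (3 * f\<^sup>2 + 3 * c\<^sup>2 + 3 * (e * p)\<^sup>2)"
  proof (rule mult_left_mono)
    show "(f + c + e * p)\<^sup>2 \<le> 3 * f\<^sup>2 + 3 * c\<^sup>2 + 3 * (e * p)\<^sup>2"
      using sum_squares_ge_zero[of "f - c" "c - e * p"] sum_squares_ge_zero[of "f - e * p" 0]
      by (simp add: power2_eq_square algebra_simps)
  qed simp
  also have "\<dots> = 3 * \<tau> * (\<tau> * f\<^sup>2) + 3 * \<tau>\<^sup>2 * c\<^sup>2 + 3 * e\<^sup>2 * \<tau> * (\<tau> * p\<^sup>2)"
    by (simp add: power2_eq_square algebra_simps)
  finally show ?thesis .
qed

lemma sc1: "x + c *\<^sub>R x = (1 + c) *\<^sub>R (x::'a::real_vector)" by (simp add: scaleR_add_left)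
lemma sc2: "c *\<^sub>R x + x = (c + 1) *\<^sub>R (x::'a::real_vector)" by (simp add: scaleR_add_left)
lemma vec3: fixes x y z :: "'a::real_vector"
  shows "x - y = (2/3) *\<^sub>R ((3/2) *\<^sub>R x - 2 *\<^sub>R y + (1/2) *\<^sub>R z) + (1/3) *\<^sub>R (y - z)"
proof -
  have "(2/3) *\<^sub>R ((3/2) *\<^sub>R x - 2 *\<^sub>R y + (1/2) *\<^sub>R z) + (1/3) *\<^sub>R (y - z)
      = ((2/3) * (3/2)) *\<^sub>R x + ((1/3) - (2/3) * 2) *\<^sub>R y + ((2/3)*(1/2) - 1/3) *\<^sub>R z"
    by (simp add: scaleR_add_right scaleR_diff_right scaleR_diff_left algebra_simps) (simp add: sc1 sc2)
  also have "\<dots> = x - y" by simp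
  finally show ?thesis by simp
qed
lemma vec4: fixes x y :: "'a::real_vector"
  shows "(3/2) *\<^sub>R x - (1/2) *\<^sub>R y + s *\<^sub>R (x - y) - x = (1/2 + s) *\<^sub>R (x - y)"
  by (simp add: scaleR_add_left scaleR_diff_right algebra_simps) (simp add: sc1 sc2)
lemma vec5: fixes x y d :: "'a::real_vector"
  shows "(3/2) *\<^sub>R x - (1/2) *\<^sub>R y + s *\<^sub>R d - x = (1/2) *\<^sub>R (x - y) + s *\<^sub>R d"
  by (simp add: scaleR_diff_right algebra_simps) (simp add: sc1 sc2)

theorem lemma4p3:
  fixes i :: "'v::banach \<Rightarrow>\<^sub>L 'h::{real_inner, complete_space}"
    and A :: "'v \<Rightarrow> ('v \<Rightarrow>\<^sub>L real)"
    and J :: "'u::banach \<Rightarrow> real"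
    and iota :: "'v \<Rightarrow>\<^sub>L 'u"
    and i1 :: "'v \<Rightarrow>\<^sub>L 'z::banach"
    and i2 :: "'z \<Rightarrow>\<^sub>L 'u"
    and jZH :: "'z \<Rightarrow>\<^sub>L 'h"
    and f :: "real \<Rightarrow> ('v \<Rightarrow>\<^sub>L real)"
    and u0 :: 'h
    and T a b \<alpha> \<beta> d c0 :: real
    and u :: "nat \<Rightarrow> nat \<Rightarrow> 'v"
    and \<xi> :: "nat \<Rightarrow> nat \<Rightarrow> ('u \<Rightarrow>\<^sub>L real)"
    and N0 :: nat
  assumes
    \<comment> \<open>spaces V, H, U and the Gelfand triple V in H in V*\<close>
    V_refl: "reflexive_space TYPE('v)" and V_sep: "separable_space TYPE('v)"
    and H_sep: "separable_space TYPE('h)"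
    and i_inj: "inj (blinfun_apply i)" and i_dense: "closure (range (blinfun_apply i)) = UNIV"
    and i_compact: "compact_op i"
    and hdual_inj: "inj (hdual i)" and hdual_dense: "closure (range (hdual i)) = UNIV"
    and U_refl: "reflexive_space TYPE('u)"
    and T_pos: "T > 0"
    \<comment> \<open>H(A)\<close>
    and A_pm: "pseudomonotone A"
    and a_nonneg: "a \<ge> 0" and b_pos: "b > 0"
    and A_bound: "\<And>v. norm (A v) \<le> a + b * norm v"
    and \<alpha>_pos: "\<alpha> > 0" and \<beta>_nonneg: "\<beta> \<ge> 0"
    and A_coerc: "\<And>v. A v v \<ge> \<alpha> * (norm v)\<^sup>2 - \<beta> * (norm (i v))\<^sup>2"
    \<comment> \<open>H(J)\<close>
    and J_loclip: "locally_lipschitz_fun J"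
    and d_pos: "d > 0"
    and J_growth: "\<And>x \<zeta>. \<zeta> \<in> clarke_subdiff J x \<Longrightarrow> norm \<zeta> \<le> d * (1 + norm x)"
    \<comment> \<open>H(iota)\<close>
    and iota_compact: "compact_op iota"
    and i1_inj: "inj (blinfun_apply i1)" and i1_compact: "compact_op i1"
    and jZH_inj: "inj (blinfun_apply jZH)"
    and i_factor: "i = jZH o\<^sub>L i1"
    and iota_factor: "iota = i2 o\<^sub>L i1"
    \<comment> \<open>H(f): f in L^2(0,T;V*)\<close>
    and f_meas: "f measurable_on {0..T}"
    and f_L2: "(\<lambda>t. (norm (f t))\<^sup>2) integrable_on {0..T}"
    \<comment> \<open>initial data\<close>
    and u0_approx: "(\<lambda>N. i (u N 0)) \<longlonglongrightarrow> u0"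
    and u0_bound: "\<And>N. N \<ge> 1 \<Longrightarrow> norm (u N 0) \<le> c0 / sqrt (T / real N)"
    \<comment> \<open>solutions of Problem P_tau for all sufficiently small tau = T/N\<close>
    and N0_pos: "N0 \<ge> 1"
    and sol1: "\<And>N. N \<ge> N0 \<Longrightarrow>
        (1 / (T / real N)) *\<^sub>R hdual i (i (u N 1 - u N 0)) + A (u N 1) + (\<xi> N 1 o\<^sub>L iota)
          = ftau f T N 1
        \<and> \<xi> N 1 \<in> clarke_subdiff J (iota (u N 1))"
    and soln: "\<And>N n. N \<ge> N0 \<Longrightarrow> 2 \<le> n \<Longrightarrow> n \<le> N \<Longrightarrow>
        (1 / (T / real N)) *\<^sub>R
           hdual i (i ((3/2) *\<^sub>R u N n - 2 *\<^sub>R u N (n - 1) + (1/2) *\<^sub>R u N (n - 2)))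
          + A (u N n) + (\<xi> N n o\<^sub>L iota) = ftau f T N n
        \<and> \<xi> N n \<in> clarke_subdiff J (iota (u N n))"
  shows "(\<lambda>N. sqrt (integral {0..T}
            (\<lambda>t. (norm (hdual i (i (uint u T N t - ubar u T N t))))\<^sup>2))) \<longlonglongrightarrow> 0"
proof -
  define L where "L v = hdual i (i v)" for v
  have L_add: "L (x + y) = L x + L y" for x y by (simp add: L_def blinfun.add_right hd_add)
  have L_diff: "L (x - y) = L x - L y" for x y by (simp add: L_def blinfun.diff_right hd_diff)
  have L_scale: "L (c *\<^sub>R x) = c *\<^sub>R L x" for c x by (simp add: L_def blinfun.scaleR_right hd_scale)
  define \<epsilon> where "\<epsilon> = sqrt (\<alpha> / (12 * d))"
  have eps_pos: "\<epsilon> > 0" using \<alpha>_pos d_pos by (simp add: \<epsilon>_def)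
  have eps_sq: "3 * d * \<epsilon>\<^sup>2 \<le> \<alpha> / 4"
  proof -
    have "\<epsilon>\<^sup>2 = \<alpha> / (12 * d)" using \<alpha>_pos d_pos by (simp add: \<epsilon>_def)
    then show ?thesis using d_pos by simp
  qed
  obtain CE0 where CE0: "\<And>v. norm (iota v) \<le> \<epsilon> * norm v + CE0 * norm (i v)"
    using ehrling_iota[OF i1_compact jZH_inj eps_pos i_factor iota_factor] by blast
  define CE where "CE = max CE0 0"
  have CE_nn: "0 \<le> CE" by (simp add: CE_def)
  have CE: "norm (iota v) \<le> \<epsilon> * norm v + CE * norm (i v)" for v
  proof -
    have "CE0 * norm (i v) \<le> CE * norm (i v)" by (intro mult_right_mono) (auto simp: CE_def)
    then show ?thesis using CE0[of v] by linarith
  qed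
  define K where "K = d/2 + \<beta> + 3 * d * CE\<^sup>2 + 1/\<alpha>"
  have K_pos: "K > 0"
  proof -
    have "0 \<le> 3 * d * CE\<^sup>2" using d_pos by simp
    moreover have "0 < 1 / \<alpha>" using \<alpha>_pos by simp
    ultimately show ?thesis unfolding K_def using d_pos \<beta>_nonneg by linarith
  qed
  have conv: "convergent (\<lambda>N. i (u N 0))" using u0_approx by (auto simp: convergent_def)
  obtain B0 where B0: "\<And>N. norm (i (u N 0)) \<le> B0"
    using convergent_imp_Bseq[OF conv] by (auto simp: Bseq_def)
  define F where "F = integral {0..T} (\<lambda>t. (norm (f t))\<^sup>2)"
  have F_nn: "0 \<le> F" unfolding F_def by (rule integral_nonneg_any) simp
  define c1 where "c1 = a + d * norm iota"
  define c2 where "c2 = b + d * (norm iota)\<^sup>2"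
  have c1_nn: "0 \<le> c1" using a_nonneg d_pos by (simp add: c1_def)
  have c2_nn: "0 \<le> c2" using b_pos d_pos by (simp add: c2_def)
  define Q1 where "Q1 = B0\<^sup>2 + 1/4 + 10 * K * F"
  define EB where "EB = exp (8 * K * T) * (4 * Q1 + 4 * K * (T + 5 * F))"
  define P2 where "P2 = (4 * Q1 + 4 * K * T * EB + 4 * K * (T + 5 * F)) / (2 * \<alpha>)"
  define A1 where "A1 = 15 * T * F + 3 * T\<^sup>2 * c1\<^sup>2 + 3 * c2\<^sup>2 * T * (Q1 / \<alpha>)"
  define DS where "DS = 15 * T * F + 3 * T\<^sup>2 * c1\<^sup>2 + 3 * c2\<^sup>2 * T * P2"
  define Cf where "Cf = 2 * A1 + 3 * DS"
  have bound: "integral {0..T} (\<lambda>t. (norm (hdual i (i (uint u T N t - ubar u T N t))))\<^sup>2) \<le> T / real N * Cf"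
    if N0N: "N0 \<le> N" and NK: "8 * K * T \<le> real N" for N
  proof -
    have N1: "N \<ge> 1" using N0N N0_pos by simp
    define \<tau> where "\<tau> = T / real N"
    have tau: "\<tau> > 0" using T_pos N1 by (simp add: \<tau>_def)
    have NT: "real N * \<tau> = T" using N1 by (simp add: \<tau>_def)
    have tauT: "\<tau> \<le> T" using N1 T_pos by (simp add: \<tau>_def field_simps)
    have tauK: "4 * K * \<tau> \<le> 1/2"
    proof -
      have "4 * K * \<tau> = (8 * K * T) / (2 * real N)" using N1 by (simp add: \<tau>_def field_simps)
      also have "\<dots> \<le> real N / (2 * real N)" using NK N1 by (intro divide_right_mono) auto
      also have "\<dots> = 1/2" using N1 by simp
      finally show ?thesis .
    qed
    have Tdef: "T / real N = \<tau>" by (simp add: \<tau>_def)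
    define U where "U n = u N n" for n
    define fv where "fv n = ftau f T N n" for n
    define fn where "fn n = norm (fv n)" for n
    define p where "p n = norm (U n)" for n
    define q where "q n = norm (i (U n))" for n
    define \<delta> where "\<delta> n = (3/2) *\<^sub>R U n - 2 *\<^sub>R U (n - 1) + (1/2) *\<^sub>R U (n - 2)" for n
    define w where "w n = U n - U (n - 1)" for n
    have fn_nn: "0 \<le> fn n" for n by (simp add: fn_def)
    have p_nn: "0 \<le> p n" for n by (simp add: p_def)
    have q_nn: "0 \<le> q n" for n by (simp add: q_def)

    define e where "e n = integral {(real n - 1) * \<tau>..real n * \<tau>} (\<lambda>t. (norm (f t))\<^sup>2)" for n
    have e_nn: "0 \<le> e n" for n unfolding e_def by (rule integral_nonneg_any) simp
    have e_sum: "(\<Sum>n=1..N. e n) = F"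
      unfolding e_def F_def using integral_sum_intervals[OF tau, of "\<lambda>t. (norm (f t))\<^sup>2" N] f_L2 NT by simp
    have int_sq: "(norm (integral {(real n - 1) * \<tau>..real n * \<tau>} f))\<^sup>2 \<le> \<tau> * e n"
      if "1 \<le> n" "n \<le> N" for n
    proof -
      have le: "(real n - 1) * \<tau> \<le> real n * \<tau>" using tau by (simp add: algebra_simps)
      have a0: "0 \<le> (real n - 1) * \<tau>" using that tau by simp
      have "real n * \<tau> \<le> real N * \<tau>" using that tau by (intro mult_right_mono) auto
      then have bT: "real n * \<tau> \<le> T" using NT by simp
      have sub: "{(real n - 1) * \<tau>..real n * \<tau>} \<subseteq> {0..T}" using a0 bT by auto
      have "real n * \<tau> - (real n - 1) * \<tau> = \<tau>" by (simp add: algebra_simps)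
      then show ?thesis using norm_integral_sq_bound[OF f_meas f_L2 le sub] by (simp add: e_def)
    qed
    have fb1: "\<tau> * (fn 1)\<^sup>2 \<le> e 1"
    proof -
      have fv1: "fv 1 = (1 / \<tau>) *\<^sub>R integral {0..\<tau>} f" by (simp add: fv_def ftau_def Tdef)
      have I: "(norm (integral {0..\<tau>} f))\<^sup>2 \<le> \<tau> * e 1" using int_sq[of 1] N1 by simp
      have "\<tau> * (fn 1)\<^sup>2 = (norm (integral {0..\<tau>} f))\<^sup>2 / \<tau>"
      proof -
        have "fn 1 = norm (integral {0..\<tau>} f) / \<tau>" unfolding fn_def fv1 using tau by simp
        then show ?thesis using tau by (simp add: power2_eq_square)
      qed
      also have "\<dots> \<le> e 1" using I tau by (simp add: pos_divide_le_eq mult.commute)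
      finally show ?thesis .
    qed
    have fbn: "\<tau> * (fn n)\<^sup>2 \<le> 9/2 * e n + 1/2 * e (n - 1)" if n: "2 \<le> n" "n \<le> N" for n
    proof -
      define I1 where "I1 = integral {(real n - 1) * \<tau>..real n * \<tau>} f"
      define I0 where "I0 = integral {(real n - 2) * \<tau>..(real n - 1) * \<tau>} f"
      have fvn: "fv n = (3 / (2 * \<tau>)) *\<^sub>R I1 - (1 / (2 * \<tau>)) *\<^sub>R I0"
        using n by (simp add: fv_def ftau_def Tdef I1_def I0_def)
      have rn: "real (n - 1) = real n - 1" using n by simp
      have rn2: "real (n - 1) - 1 = real n - 2" using rn by simp
      have x: "(norm I1)\<^sup>2 \<le> \<tau> * e n" using int_sq[of n] n by (simp add: I1_def)
      have y: "(norm I0)\<^sup>2 \<le> \<tau> * e (n - 1)" using int_sq[of "n - 1"] n by (simp add: I0_def rn rn2)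
      have fb: "fn n \<le> 3 / (2 * \<tau>) * norm I1 + 1 / (2 * \<tau>) * norm I0"
      proof -
        have "fn n \<le> norm ((3 / (2 * \<tau>)) *\<^sub>R I1) + norm ((1 / (2 * \<tau>)) *\<^sub>R I0)"
          unfolding fn_def fvn by (rule norm_triangle_ineq4)
        then show ?thesis using tau by simp
      qed
      show ?thesis by (rule fbn_real[OF tau _ _ fn_nn fb x y]) simp_all
    qed
    define e' where "e' n = (if n = 0 then 0 else e n)" for n
    have e'_nn: "0 \<le> e' n" for n by (simp add: e'_def e_nn)
    have fbe: "\<tau> * (fn n)\<^sup>2 \<le> 9/2 * e' n + 1/2 * e' (n - 1)" if "n \<in> {1..N}" for n
    proof (cases "n = 1")
      case True then show ?thesis using fb1 e_nn[of 1] by (simp add: e'_def)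
    next
      case False then show ?thesis using that fbn[of n] by (simp add: e'_def)
    qed
    have fsum: "(\<Sum>n=1..N. \<tau> * (fn n)\<^sup>2) \<le> 5 * F"
    proof -
      have "(\<Sum>n=1..N. \<tau> * (fn n)\<^sup>2) \<le> (\<Sum>n=1..N. 9/2 * e' n + 1/2 * e' (n - 1))"
        by (rule sum_mono) (rule fbe)
      also have "\<dots> = 9/2 * (\<Sum>n=1..N. e' n) + 1/2 * (\<Sum>n=1..N. e' (n - 1))"
        by (simp add: sum.distrib sum_distrib_left)
      also have "\<dots> \<le> 9/2 * (\<Sum>n=1..N. e' n) + 1/2 * (\<Sum>n=1..N. e' n)"
        using sum_shift_le[of e' N] e'_nn by (simp add: e'_def)
      also have "(\<Sum>n=1..N. e' n) = (\<Sum>n=1..N. e n)" by (rule sum.cong) (auto simp: e'_def)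
      finally show ?thesis using e_sum by simp
    qed
    have fsum_nn: "0 \<le> \<tau> * (fn n)\<^sup>2" for n using tau by simp
    have fone: "\<tau> * (fn n)\<^sup>2 \<le> 5 * F" if "n \<in> {1..N}" for n
      using member_le_sum[of n "{1..N}" "\<lambda>n. \<tau> * (fn n)\<^sup>2"] fsum_nn that fsum by fastforce
    have fsum2: "(\<Sum>n=2..N. \<tau> * (fn n)\<^sup>2) \<le> 5 * F"
      using sum_mono2[of "{1..N}" "{2..N}" "\<lambda>n. \<tau> * (fn n)\<^sup>2"] fsum_nn fsum by fastforce
    define G where "G n = 4 * K * \<tau> * (1 + (fn n)\<^sup>2)" for n
    have G_nn: "0 \<le> G n" for n using K_pos tau by (simp add: G_def)
    have Gsum: "(\<Sum>n=2..N. G n) \<le> 4 * K * (T + 5 * F)"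
    proof -
      have "(\<Sum>n=2..N. G n) \<le> (\<Sum>n=1..N. G n)" by (rule sum_mono2) (auto simp: G_nn)
      also have "\<dots> = 4 * K * (real N * \<tau> + (\<Sum>n=1..N. \<tau> * (fn n)\<^sup>2))"
        by (simp add: G_def sum.distrib sum_distrib_left algebra_simps)
      also have "\<dots> \<le> 4 * K * (T + 5 * F)" using fsum NT K_pos by (intro mult_left_mono) auto
      finally show ?thesis .
    qed

    have xi_b: "norm (\<xi> N n) \<le> d * (1 + norm (iota (U n)))" if "\<xi> N n \<in> clarke_subdiff J (iota (U n))" for n
      using J_growth[OF that] .
    have sol1': "(1 / \<tau>) *\<^sub>R hdual i (i (w 1)) + A (U 1) + (\<xi> N 1 o\<^sub>L iota) = fv 1"
      and sub1: "\<xi> N 1 \<in> clarke_subdiff J (iota (U 1))"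
      using sol1[OF N0N] by (simp_all add: Tdef U_def w_def fv_def)
    have soln': "(1 / \<tau>) *\<^sub>R hdual i (i (\<delta> n)) + A (U n) + (\<xi> N n o\<^sub>L iota) = fv n"
      and subn: "\<xi> N n \<in> clarke_subdiff J (iota (U n))"
      if "2 \<le> n" "n \<le> N" for n
      using soln[OF N0N that] by (simp_all add: Tdef U_def \<delta>_def fv_def)
    have eps_nn: "0 \<le> \<epsilon>" using eps_pos by simp
    have T1a: "(1 / \<tau>) * inner (i (w 1)) (i (U 1)) + (\<alpha>/2) * (p 1)\<^sup>2 \<le> K * (1 + (q 1)\<^sup>2 + (fn 1)\<^sup>2)"
      and T1b: "norm (L (w 1)) \<le> \<tau> * (fn 1 + c1 + c2 * p 1)"
      using tested_step(1)[where A=A and x="U 1" and D="w 1", OF sol1' tau xi_b[OF sub1] A_bound[of "U 1"] A_coerc[of "U 1"] CE[of "U 1"] eps_sq d_pos \<alpha>_pos eps_nn CE_nn \<beta>_nonneg]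
        tested_step(2)[where A=A and x="U 1" and D="w 1", OF sol1' tau xi_b[OF sub1] A_bound[of "U 1"] A_coerc[of "U 1"] CE[of "U 1"] eps_sq d_pos \<alpha>_pos eps_nn CE_nn \<beta>_nonneg]
      by (simp_all add: K_def p_def q_def fn_def L_def c1_def c2_def)
    have Tna: "(1 / \<tau>) * inner (i (\<delta> n)) (i (U n)) + (\<alpha>/2) * (p n)\<^sup>2 \<le> K * (1 + (q n)\<^sup>2 + (fn n)\<^sup>2)"
      and Tnb: "norm (L (\<delta> n)) \<le> \<tau> * (fn n + c1 + c2 * p n)"
      if "2 \<le> n" "n \<le> N" for n
      using tested_step(1)[where A=A and x="U n" and D="\<delta> n", OF soln'[OF that] tau xi_b[OF subn[OF that]] A_bound[of "U n"] A_coerc[of "U n"] CE[of "U n"] eps_sq d_pos \<alpha>_pos eps_nn CE_nn \<beta>_nonneg]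
        tested_step(2)[where A=A and x="U n" and D="\<delta> n", OF soln'[OF that] tau xi_b[OF subn[OF that]] A_bound[of "U n"] A_coerc[of "U n"] CE[of "U n"] eps_sq d_pos \<alpha>_pos eps_nn CE_nn \<beta>_nonneg]
      by (simp_all add: K_def p_def q_def fn_def L_def c1_def c2_def)

    define z1 where "z1 = norm (i (w 1))"
    have q0: "(q 0)\<^sup>2 \<le> B0\<^sup>2"
      using B0[of N] q_nn[of 0] by (intro power_mono) (simp_all add: q_def U_def)
    have id1: "inner (i (w 1)) (i (U 1)) = ((q 1)\<^sup>2 - (q 0)\<^sup>2 + z1\<^sup>2) / 2"
      using bdf1_id[of "i (U 1)" "i (U 0)"] by (simp add: w_def blinfun.diff_right q_def z1_def)
    have Q1b: "3/4 * (q 1)\<^sup>2 + z1\<^sup>2 + \<alpha> * (\<tau> * (p 1)\<^sup>2) \<le> Q1"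
    proof -
      have "2 * \<tau> * ((1 / \<tau>) * inner (i (w 1)) (i (U 1)) + (\<alpha>/2) * (p 1)\<^sup>2) \<le> 2 * \<tau> * (K * (1 + (q 1)\<^sup>2 + (fn 1)\<^sup>2))"
        using T1a tau by (intro mult_left_mono) auto
      moreover have "2 * \<tau> * ((1 / \<tau>) * inner (i (w 1)) (i (U 1)) + (\<alpha>/2) * (p 1)\<^sup>2) = (q 1)\<^sup>2 - (q 0)\<^sup>2 + z1\<^sup>2 + \<alpha> * (\<tau> * (p 1)\<^sup>2)"
        using tau unfolding id1 by (simp add: field_simps)
      moreover have "2 * \<tau> * (K * (1 + (q 1)\<^sup>2 + (fn 1)\<^sup>2)) = 2 * K * \<tau> + (2 * K * \<tau>) * (q 1)\<^sup>2 + 2 * K * (\<tau> * (fn 1)\<^sup>2)"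
        by (simp add: algebra_simps)
      ultimately have "(q 1)\<^sup>2 - (q 0)\<^sup>2 + z1\<^sup>2 + \<alpha> * (\<tau> * (p 1)\<^sup>2) \<le> 2 * K * \<tau> + (2 * K * \<tau>) * (q 1)\<^sup>2 + 2 * K * (\<tau> * (fn 1)\<^sup>2)"
        by simp
      moreover have "(2 * K * \<tau>) * (q 1)\<^sup>2 \<le> 1/4 * (q 1)\<^sup>2" using tauK by (intro mult_right_mono) auto
      moreover have "2 * K * (\<tau> * (fn 1)\<^sup>2) \<le> 2 * K * (5 * F)" using fone[of 1] N1 K_pos by (intro mult_left_mono) auto
      ultimately show ?thesis using q0 tauK unfolding Q1_def by linarith
    qed
    have z1_nn: "0 \<le> z1" by (simp add: z1_def)
    have tp1: "\<tau> * (p 1)\<^sup>2 \<le> Q1 / \<alpha>"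
    proof -
      have "0 \<le> (q 1)\<^sup>2" "0 \<le> z1\<^sup>2" by simp_all
      then have "\<alpha> * (\<tau> * (p 1)\<^sup>2) \<le> Q1" using Q1b by linarith
      then show ?thesis using \<alpha>_pos by (simp add: pos_le_divide_eq mult.commute)
    qed

    define E where "E n = (q n)\<^sup>2 + (norm (i (2 *\<^sub>R U n - U (n - 1))))\<^sup>2" for n
    have E_nn: "0 \<le> E n" for n by (simp add: E_def)
    have E1: "E 1 \<le> 4 * Q1"
    proof -
      have "norm (i (2 *\<^sub>R U 1 - U 0)) \<le> q 1 + z1"
      proof -
        have "i (2 *\<^sub>R U 1 - U 0) = i (U 1) + i (w 1)"
          by (simp add: w_def blinfun.diff_right blinfun.scaleR_right blinfun.add_right scaleR_2)
        then show ?thesis by (simp add: q_def z1_def norm_triangle_ineq)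
      qed
      then have "(norm (i (2 *\<^sub>R U 1 - U 0)))\<^sup>2 \<le> (q 1 + z1)\<^sup>2" by (intro power_mono) simp_all
      also have "\<dots> \<le> 2 * (q 1)\<^sup>2 + 2 * z1\<^sup>2"
        using sum_squares_ge_zero[of "q 1 - z1" 0] by (simp add: power2_eq_square algebra_simps)
      finally have "E 1 \<le> 3 * (q 1)\<^sup>2 + 2 * z1\<^sup>2" by (simp add: E_def)
      moreover have "0 \<le> \<alpha> * (\<tau> * (p 1)\<^sup>2)" using \<alpha>_pos tau by simp
      moreover have "0 \<le> z1\<^sup>2" by simp
      ultimately show ?thesis using Q1b by linarith
    qed
    have stepE: "E n - E (n - 1) + 2 * \<alpha> * (\<tau> * (p n)\<^sup>2) \<le> 4 * K * \<tau> * E n + G n"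
      if n: "2 \<le> n" "n \<le> N" for n
    proof -
      have iid: "4 * inner (i (\<delta> n)) (i (U n)) = E n - E (n - 1) + (norm (i (U n - 2 *\<^sub>R U (n - 1) + U (n - 2))))\<^sup>2"
      proof -
        have nn: "n - 1 - 1 = n - 2" "n - Suc (Suc 0) = n - 2" by simp_all
        show ?thesis
          using bdf2_id[of "i (U n)" "i (U (n - 1))" "i (U (n - 2))"]
          by (simp add: \<delta>_def E_def q_def nn blinfun.add_right blinfun.diff_right blinfun.scaleR_right)
      qed
      have "4 * \<tau> * ((1 / \<tau>) * inner (i (\<delta> n)) (i (U n)) + (\<alpha>/2) * (p n)\<^sup>2) \<le> 4 * \<tau> * (K * (1 + (q n)\<^sup>2 + (fn n)\<^sup>2))"
        using Tna[OF n] tau by (intro mult_left_mono) auto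
      then have a1: "4 * inner (i (\<delta> n)) (i (U n)) + 2 * \<alpha> * (\<tau> * (p n)\<^sup>2) \<le> 4 * K * \<tau> * (q n)\<^sup>2 + G n"
        using tau by (simp add: G_def algebra_simps)
      have "4 * K * \<tau> * (q n)\<^sup>2 \<le> 4 * K * \<tau> * E n"
        using K_pos tau by (intro mult_left_mono) (auto simp: E_def)
      moreover have "0 \<le> (norm (i (U n - 2 *\<^sub>R U (n - 1) + U (n - 2))))\<^sup>2" by simp
      ultimately show ?thesis using a1 iid by linarith
    qed
    have EB: "E n \<le> EB" if "1 \<le> n" "n \<le> N" for n
    proof -
      have x0: "0 \<le> 4 * K * \<tau>" using K_pos tau by simp
      have st: "(1 - 4 * K * \<tau>) * E n \<le> E (n - 1) + G n" if "2 \<le> n" "n \<le> N" for n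
      proof -
        have "0 \<le> 2 * \<alpha> * (\<tau> * (p n)\<^sup>2)" using \<alpha>_pos tau by simp
        then show ?thesis using stepE[OF that] by (simp add: algebra_simps)
      qed
      have "E n \<le> exp (2 * (4 * K * \<tau>) * real N) * (E 1 + (\<Sum>k=2..N. G k))"
        by (rule gronwall_disc[where E=E and G=G and N=N and x="4 * K * \<tau>", OF x0 tauK G_nn E_nn st that])
      also have "2 * (4 * K * \<tau>) * real N = 8 * K * T" using NT by (simp add: algebra_simps)
      also have "exp (8 * K * T) * (E 1 + (\<Sum>k=2..N. G k)) \<le> EB"
        unfolding EB_def using E1 Gsum by (intro mult_left_mono) auto
      finally show ?thesis .
    qed
    have EB_nn: "0 \<le> EB" using EB[of 1] E_nn[of 1] N1 by simp
    have Psum: "(\<Sum>n=2..N. \<tau> * (p n)\<^sup>2) \<le> P2"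
    proof -
      have "(\<Sum>n=2..N. 2 * \<alpha> * (\<tau> * (p n)\<^sup>2)) \<le> (\<Sum>n=2..N. (E (n - 1) - E n) + 4 * K * \<tau> * E n + G n)"
        by (rule sum_mono) (use stepE in force)
      also have "\<dots> = (E 1 - E N) + 4 * K * \<tau> * (\<Sum>n=2..N. E n) + (\<Sum>n=2..N. G n)"
        using tele[OF N1, of E] by (simp add: sum.distrib sum_distrib_left)
      also have "\<dots> \<le> 4 * Q1 + 4 * K * T * EB + 4 * K * (T + 5 * F)"
      proof -
        have "(\<Sum>n=2..N. E n) \<le> (\<Sum>n=2..N. EB)" by (rule sum_mono) (use EB in auto)
        also have "\<dots> = real (N - 1) * EB" by simp
        also have "\<dots> \<le> real N * EB" using EB_nn by (intro mult_right_mono) auto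
        finally have "4 * K * \<tau> * (\<Sum>n=2..N. E n) \<le> 4 * K * \<tau> * (real N * EB)"
          using K_pos tau by (intro mult_left_mono) auto
        also have "\<dots> = 4 * K * T * EB" using NT by (simp add: algebra_simps)
        finally show ?thesis using E1 E_nn[of N] Gsum by linarith
      qed
      finally have "2 * \<alpha> * (\<Sum>n=2..N. \<tau> * (p n)\<^sup>2) \<le> 4 * Q1 + 4 * K * T * EB + 4 * K * (T + 5 * F)"
        by (simp add: sum_distrib_left)
      then show ?thesis unfolding P2_def using \<alpha>_pos by (simp add: pos_le_divide_eq mult.commute)
    qed

    define D where "D n = norm (L (\<delta> n))" for n
    define aw where "aw n = norm (L (w n))" for n
    have D_nn: "0 \<le> D n" for n by (simp add: D_def)
    have aw_nn: "0 \<le> aw n" for n by (simp add: aw_def)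
    have Dsq: "(D n)\<^sup>2 \<le> 3 * \<tau> * (\<tau> * (fn n)\<^sup>2) + 3 * \<tau>\<^sup>2 * c1\<^sup>2 + 3 * c2\<^sup>2 * \<tau> * (\<tau> * (p n)\<^sup>2)"
      if "2 \<le> n" "n \<le> N" for n
      using sq3[OF D_nn Tnb[OF that, folded D_def] tau fn_nn c1_nn c2_nn p_nn] .
    have DS: "(\<Sum>n=2..N. (D n)\<^sup>2) \<le> DS"
    proof -
      have "(\<Sum>n=2..N. (D n)\<^sup>2) \<le> (\<Sum>n=2..N. 3 * \<tau> * (\<tau> * (fn n)\<^sup>2) + 3 * \<tau>\<^sup>2 * c1\<^sup>2 + 3 * c2\<^sup>2 * \<tau> * (\<tau> * (p n)\<^sup>2))"
        by (rule sum_mono) (use Dsq in auto)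
      also have "\<dots> = 3 * \<tau> * (\<Sum>n=2..N. \<tau> * (fn n)\<^sup>2) + real (N - 1) * (3 * \<tau>\<^sup>2 * c1\<^sup>2) + 3 * c2\<^sup>2 * \<tau> * (\<Sum>n=2..N. \<tau> * (p n)\<^sup>2)"
        by (simp add: sum.distrib sum_distrib_left)
      also have "\<dots> \<le> 3 * T * (5 * F) + 3 * T\<^sup>2 * c1\<^sup>2 + 3 * c2\<^sup>2 * T * P2"
      proof -
        have s1: "3 * \<tau> * (\<Sum>n=2..N. \<tau> * (fn n)\<^sup>2) \<le> 3 * T * (5 * F)"
          using fsum2 tauT tau F_nn sum_nonneg[of "{2..N}" "\<lambda>n. \<tau> * (fn n)\<^sup>2"] fsum_nn
          by (intro mult_mono) auto
        have "real (N - 1) * \<tau>\<^sup>2 \<le> real N * \<tau> * \<tau>" using tau N1 by (simp add: power2_eq_square)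
        also have "\<dots> \<le> T * T" using NT tauT T_pos by simp
        finally have "real (N - 1) * \<tau>\<^sup>2 * (3 * c1\<^sup>2) \<le> T * T * (3 * c1\<^sup>2)"
          by (intro mult_right_mono) auto
        then have s2: "real (N - 1) * (3 * \<tau>\<^sup>2 * c1\<^sup>2) \<le> 3 * T\<^sup>2 * c1\<^sup>2" by (simp add: power2_eq_square algebra_simps)
        have pnn: "0 \<le> (\<Sum>n=2..N. \<tau> * (p n)\<^sup>2)" using tau by (intro sum_nonneg) simp
        have s3: "3 * c2\<^sup>2 * \<tau> * (\<Sum>n=2..N. \<tau> * (p n)\<^sup>2) \<le> 3 * c2\<^sup>2 * T * P2"
          using Psum tauT tau pnn by (intro mult_mono) auto
        show ?thesis using s1 s2 s3 by linarith
      qed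
      finally show ?thesis unfolding DS_def by simp
    qed
    have A1b: "(aw 1)\<^sup>2 \<le> A1"
    proof -
      have "(aw 1)\<^sup>2 \<le> 3 * \<tau> * (\<tau> * (fn 1)\<^sup>2) + 3 * \<tau>\<^sup>2 * c1\<^sup>2 + 3 * c2\<^sup>2 * \<tau> * (\<tau> * (p 1)\<^sup>2)"
        using sq3[OF aw_nn T1b[folded aw_def] tau fn_nn c1_nn c2_nn p_nn] .
      also have "\<dots> \<le> 3 * T * (5 * F) + 3 * T\<^sup>2 * c1\<^sup>2 + 3 * c2\<^sup>2 * T * (Q1 / \<alpha>)"
      proof -
        have s1: "3 * \<tau> * (\<tau> * (fn 1)\<^sup>2) \<le> 3 * T * (5 * F)"
        proof (rule mult_mono)
          show "\<tau> * (fn 1)\<^sup>2 \<le> 5 * F" using fone[of 1] N1 by simp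
        qed (use tauT tau F_nn in auto)
        have "\<tau>\<^sup>2 \<le> T\<^sup>2" using tauT tau by (intro power_mono) auto
        then have s2: "3 * \<tau>\<^sup>2 * c1\<^sup>2 \<le> 3 * T\<^sup>2 * c1\<^sup>2" by (intro mult_right_mono) auto
        have s3: "3 * c2\<^sup>2 * \<tau> * (\<tau> * (p 1)\<^sup>2) \<le> 3 * c2\<^sup>2 * T * (Q1 / \<alpha>)"
          using tp1 tauT tau by (intro mult_mono) auto
        show ?thesis using s1 s2 s3 by linarith
      qed
      finally show ?thesis unfolding A1_def by simp
    qed
    have recw: "aw n \<le> (2/3) * D n + (1/3) * aw (n - 1)" if "2 \<le> n" "n \<le> N" for n
    proof -
      have nn: "n - 1 - 1 = n - 2" by simp
      have "w n = (2/3) *\<^sub>R \<delta> n + (1/3) *\<^sub>R w (n - 1)"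
        unfolding w_def \<delta>_def nn by (rule vec3)
      then have "L (w n) = (2/3) *\<^sub>R L (\<delta> n) + (1/3) *\<^sub>R L (w (n - 1))" by (simp add: L_add L_scale)
      then have "aw n = norm ((2/3) *\<^sub>R L (\<delta> n) + (1/3) *\<^sub>R L (w (n - 1)))" by (simp add: aw_def)
      also have "\<dots> \<le> norm ((2/3) *\<^sub>R L (\<delta> n)) + norm ((1/3) *\<^sub>R L (w (n - 1)))" by (rule norm_triangle_ineq)
      also have "\<dots> = (2/3) * D n + (1/3) * aw (n - 1)" by (simp add: D_def aw_def)
      finally show ?thesis .
    qed
    have awsum: "(\<Sum>n=2..N. (aw n)\<^sup>2) + (aw N)\<^sup>2 / 2 \<le> (\<Sum>n=2..N. (D n)\<^sup>2) + (aw 1)\<^sup>2 / 2"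
      by (rule rec_sum[where a=aw and d=D and M=N, OF aw_nn recw N1 order.refl])

    define c where "c n = (if n = 1 then (aw 1)\<^sup>2 else (aw n)\<^sup>2 + 2 * (D n)\<^sup>2)" for n
    have c_nn: "0 \<le> c n" for n by (simp add: c_def)
    have pw: "(norm (hdual i (i (uint u T N t - ubar u T N t))))\<^sup>2 \<le> c n"
      if n: "1 \<le> n" "n \<le> N" and t: "(real n - 1) * \<tau> < t" "t \<le> real n * \<tau>" for n t
    proof -
      have ci: "nat \<lceil>t / \<tau>\<rceil> = n" by (rule ceil_idx[OF tau t])
      have tpos: "0 < t" using t n tau by (smt (verit) mult_nonneg_nonneg of_nat_1 of_nat_le_iff)
      have ub: "ubar u T N t = U n" using tpos ci by (simp add: ubar_def Tdef U_def)
      define s where "s = (t - real n * \<tau>) / \<tau>"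
      have s1: "-1 < s" "s \<le> 0"
        using t tau by (simp_all add: s_def field_simps)
      show ?thesis
      proof (cases "n = 1")
        case True
        have ui: "uint u T N t = (3/2) *\<^sub>R U 1 - (1/2) *\<^sub>R U 0 + s *\<^sub>R (U 1 - U 0)"
        proof -
          have c: "nat \<lceil>t / \<tau>\<rceil> = 1" using ci True by simp
          show ?thesis unfolding uint_def Let_def Tdef c using True by (simp add: U_def s_def)
        qed
        have "uint u T N t - ubar u T N t = (1/2 + s) *\<^sub>R w 1"
          unfolding ui ub True using vec4[of "U 1" "U 0" s] by (simp add: w_def)
        then have "hdual i (i (uint u T N t - ubar u T N t)) = (1/2 + s) *\<^sub>R L (w 1)"
          by (simp add: L_def[symmetric] L_scale)
        then have "norm (hdual i (i (uint u T N t - ubar u T N t))) = \<bar>1/2 + s\<bar> * aw 1"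
          by (simp add: aw_def)
        also have "\<dots> \<le> 1 * aw 1" using s1 aw_nn[of 1] by (intro mult_right_mono) auto
        finally have "norm (hdual i (i (uint u T N t - ubar u T N t))) \<le> aw 1" by simp
        then have "(norm (hdual i (i (uint u T N t - ubar u T N t))))\<^sup>2 \<le> (aw 1)\<^sup>2"
          by (intro power_mono) simp_all
        then show ?thesis using True by (simp add: c_def)
      next
        case False
        then have n2: "2 \<le> n" using n by simp
        have ui: "uint u T N t = (3/2) *\<^sub>R U n - (1/2) *\<^sub>R U (n - 1) + s *\<^sub>R \<delta> n"
        proof -
          have nl: "\<not> n \<le> 1" using n2 by simp
          show ?thesis unfolding uint_def Let_def Tdef ci using nl by (simp add: U_def s_def \<delta>_def)
        qed
        have "uint u T N t - ubar u T N t = (1/2) *\<^sub>R w n + s *\<^sub>R \<delta> n"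
          unfolding ui ub using vec5[of "U n" "U (n - 1)" s "\<delta> n"] by (simp add: w_def)
        then have "hdual i (i (uint u T N t - ubar u T N t)) = (1/2) *\<^sub>R L (w n) + s *\<^sub>R L (\<delta> n)"
          by (simp add: L_def[symmetric] L_scale L_add)
        then have "norm (hdual i (i (uint u T N t - ubar u T N t))) \<le> norm ((1/2) *\<^sub>R L (w n)) + norm (s *\<^sub>R L (\<delta> n))"
          by (simp only:) (rule norm_triangle_ineq)
        also have "\<dots> = (1/2) * aw n + \<bar>s\<bar> * D n" by (simp add: aw_def D_def)
        also have "\<dots> \<le> (1/2) * aw n + 1 * D n" using s1 D_nn[of n] by (intro add_left_mono mult_right_mono) auto
        finally have nb: "norm (hdual i (i (uint u T N t - ubar u T N t))) \<le> (1/2) * aw n + D n" by simp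
        have "(norm (hdual i (i (uint u T N t - ubar u T N t))))\<^sup>2 \<le> ((1/2) * aw n + D n)\<^sup>2"
          using nb by (intro power_mono) simp_all
        also have "\<dots> \<le> (aw n)\<^sup>2 + 2 * (D n)\<^sup>2"
          using sum_squares_ge_zero[of "(1/2) * aw n - D n" 0] sum_squares_ge_zero[of "aw n" 0]
          by (simp add: power2_eq_square algebra_simps) (use zero_le_square[of "aw n"] in linarith)
        finally show ?thesis using False by (simp add: c_def)
      qed
    qed
    have "integral {0..real N * \<tau>} (\<lambda>t. (norm (hdual i (i (uint u T N t - ubar u T N t))))\<^sup>2) \<le> \<tau> * (\<Sum>n=1..N. c n)"
      by (rule step_integral[OF tau pw c_nn])
    moreover have "(\<Sum>n=1..N. c n) \<le> Cf"
    proof -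
      have "(\<Sum>n=1..N. c n) = c 1 + (\<Sum>n=2..N. c n)"
        using sum.atLeast_Suc_atMost[OF N1, of c] by (simp add: numeral_2_eq_2)
      also have "(\<Sum>n=2..N. c n) = (\<Sum>n=2..N. (aw n)\<^sup>2) + 2 * (\<Sum>n=2..N. (D n)\<^sup>2)"
        by (simp add: c_def sum.distrib sum_distrib_left)
      finally have "(\<Sum>n=1..N. c n) = (aw 1)\<^sup>2 + ((\<Sum>n=2..N. (aw n)\<^sup>2) + 2 * (\<Sum>n=2..N. (D n)\<^sup>2))"
        by (simp add: c_def)
      moreover have "0 \<le> (aw N)\<^sup>2 / 2" "0 \<le> (aw 1)\<^sup>2" by simp_all
      ultimately show ?thesis using awsum DS A1b unfolding Cf_def by linarith
    qed
    ultimately have "integral {0..real N * \<tau>} (\<lambda>t. (norm (hdual i (i (uint u T N t - ubar u T N t))))\<^sup>2) \<le> \<tau> * Cf"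
      using tau by (smt (verit) mult_left_mono)
    then show ?thesis using NT by (simp add: \<tau>_def)
  qed
  have ev: "eventually (\<lambda>N. N0 \<le> N \<and> 8 * K * T \<le> real N) sequentially"
    using eventually_ge_at_top[of "max N0 (nat \<lceil>8 * K * T\<rceil>)"]
  proof eventually_elim
    case (elim N)
    have "8 * K * T \<le> real (nat \<lceil>8 * K * T\<rceil>)" by (rule real_nat_ceiling_ge)
    also have "\<dots> \<le> real N" using elim by simp
    finally show ?case using elim by simp
  qed
  have nn: "0 \<le> integral {0..T} (\<lambda>t. (norm (hdual i (i (uint u T N t - ubar u T N t))))\<^sup>2)" for N
    by (rule integral_nonneg_any) simp
  show ?thesis
  proof (rule tendsto_sandwich[where f="\<lambda>N. 0" and h="\<lambda>N. sqrt (T * Cf / real N)"])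
    show "\<forall>\<^sub>F N in sequentially. 0 \<le> sqrt (integral {0..T} (\<lambda>t. (norm (hdual i (i (uint u T N t - ubar u T N t))))\<^sup>2))"
      using nn by simp
    show "\<forall>\<^sub>F N in sequentially. sqrt (integral {0..T} (\<lambda>t. (norm (hdual i (i (uint u T N t - ubar u T N t))))\<^sup>2)) \<le> sqrt (T * Cf / real N)"
      using ev
    proof eventually_elim
      case (elim N)
      then show ?case using bound[of N] by (simp add: real_sqrt_le_mono)
    qed
    show "(\<lambda>N. 0) \<longlonglongrightarrow> (0::real)" by simp
    show "(\<lambda>N. sqrt (T * Cf / real N)) \<longlonglongrightarrow> 0"
      using tendsto_real_sqrt[OF lim_const_over_n[where 'a=real, of "T * Cf"]] by simp
  qed
qed

end
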